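(* Let $p$ be a positive integer and $\mathbb{K}$ a field with $\#\mathbb{K}>p$. Let $E$ be an $n$-dimensional $\mathbb{K}$-vector space and $(E_i)_{i\in I}$ a family of $(n-1)p+1$ linear subspaces of $E$ in which exactly $p+1$ subspaces have dimension $n-1$ and, for each $k\in\{1,\dots,n-2\}$, exactly $p$ subspaces have dimension $k$. Then $E\not\subset\bigcup_{i\in I}E_i$. Consequently, if $(E_i)_{i\in I}$ is a family of $(n-1)p$ linear subspaces of $E$ in which, for each $k\in\{1,\dots,n-1\}$, exactly $p$ subspaces have dimension $k$, then there exists a basis of $E$ none of whose vectors lies in $\bigcup_{i\in I}E_i$. *)

theory Defs
  imports Complex_Main
begin

end

theory Submission
  imports Defs
begin

locale cov = finite_dimensional_vector_space scale Basis
  for scale :: "'k::field \<Rightarrow> 'v::ab_group_add \<Rightarrow> 'v" (infixr \<open>*s\<close> 75) and Basis +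
  fixes p :: nat
  assumes fs: "infinite (UNIV :: 'k set) \<or> card (UNIV :: 'k set) > p"
begin

lemma spanS: "subspace S \<Longrightarrow> span S = S"
  by simp

lemma GL:
  assumes A: "subspace A" and H: "subspace H" and AH: "A \<subseteq> H" and a: "a \<notin> H"
    and x: "x \<in> span (insert a A)" and xH: "x \<in> H"
  shows "x \<in> A"
proof -
  obtain k where k: "x - k *s a \<in> A" using x unfolding span_breakdown_eq spanS[OF A] by blast
  have "k *s a = x - (x - k *s a)" by simp
  also have "\<dots> \<in> H" using k AH xH H by (blast intro: subspace_diff)
  finally have ka: "k *s a \<in> H" .
  have "k = 0"
  proof (rule ccontr)
    assume "k \<noteq> 0"
    then have "inverse k *s (k *s a) = a" by simp
    then show False using subspace_scale[OF H ka, of "inverse k"] a by simp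
  qed
  then show ?thesis using k by simp
qed

lemma HI:
  assumes U: "subspace U" and S: "subspace S" and H: "subspace H"
    and SU: "S \<subseteq> U" and HU: "H \<subseteq> U" and dH: "dim H + 1 = dim U" and nS: "\<not> S \<subseteq> H"
  shows "dim (S \<inter> H) + 1 = dim S"
proof -
  let ?ST = "{x + y |x y. x \<in> S \<and> y \<in> H}"
  have sub: "subspace ?ST" using subspace_sums[OF S H] .
  have STU: "?ST \<subseteq> U" using SU HU U by (auto intro: subspace_add)
  have HST: "H \<subseteq> ?ST"
  proof
    fix y assume "y \<in> H" then show "y \<in> ?ST" using subspace_0[OF S] by force
  qed
  have SST: "S \<subseteq> ?ST"
  proof
    fix y assume "y \<in> S" then show "y \<in> ?ST" using subspace_0[OF H] by force
  qed
  have "H \<noteq> ?ST" using SST nS by blast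
  then have "span H \<subset> span ?ST" using HST unfolding spanS[OF H] spanS[OF sub] by auto
  then have "dim H < dim ?ST" by (rule dim_psubset)
  moreover have "dim ?ST \<le> dim U" using STU by (rule dim_subset)
  ultimately have "dim ?ST = dim U" using dH by linarith
  with dim_sums_Int[OF S H] dH show ?thesis by linarith
qed

lemma EX:
  assumes "subspace S" "subspace U" "S \<subseteq> U" "dim S < dim U"
  shows "\<exists>H. subspace H \<and> S \<subseteq> H \<and> H \<subseteq> U \<and> dim H + 1 = dim U"
proof -
  have "\<And>S. subspace S \<Longrightarrow> S \<subseteq> U \<Longrightarrow> dim U = dim S + 1 + k \<Longrightarrow>
        \<exists>H. subspace H \<and> S \<subseteq> H \<and> H \<subseteq> U \<and> dim H + 1 = dim U" for k
  proof (induction k)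
    case 0 then show ?case by auto
  next
    case (Suc k)
    have "\<not> U \<subseteq> S" using Suc.prems dim_subset[of U S] by linarith
    then obtain x where x: "x \<in> U" "x \<notin> S" by blast
    let ?S = "span (insert x S)"
    have "x \<notin> span S" using x unfolding spanS[OF Suc.prems(1)] by simp
    then have d: "dim ?S = dim S + 1" by (simp add: dim_insert)
    have "?S \<subseteq> U" using x Suc.prems assms(2) by (intro span_minimal) auto
    moreover have "S \<subseteq> ?S" by (meson span_superset subset_insertI subset_trans)
    moreover have "dim U = dim ?S + 1 + k" using d Suc.prems by simp
    ultimately show ?case using Suc.IH[of ?S] by blast
  qed
  moreover have "dim U = dim S + 1 + (dim U - dim S - 1)" using assms(4) by linarith
  ultimately show ?thesis using assms by blast
qed

definition Bprop :: "nat \<Rightarrow> bool" where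
  "Bprop n \<longleftrightarrow> (\<forall>U H \<E>. subspace U \<and> dim U = n \<and> subspace H \<and> H \<subseteq> U \<and> dim H + 1 = n
     \<and> finite \<E> \<and> (\<forall>S\<in>\<E>. subspace S \<and> S \<subseteq> U \<and> 1 \<le> dim S \<and> dim S + 1 \<le> n)
     \<and> (\<forall>k. card {S\<in>\<E>. dim S = k} \<le> p)
     \<longrightarrow> (\<exists>x\<in>U. x \<notin> H \<and> (\<forall>S\<in>\<E>. x \<notin> S)))"

definition Dprop :: "nat \<Rightarrow> bool" where
  "Dprop n \<longleftrightarrow> (\<forall>U \<D>. subspace U \<and> dim U = n \<and> 1 \<le> n
     \<and> finite \<D> \<and> (\<forall>S\<in>\<D>. subspace S \<and> S \<subseteq> U \<and> 1 \<le> dim S \<and> dim S + 1 \<le> n)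
     \<and> (\<forall>k. card {S\<in>\<D>. dim S = k} \<le> p)
     \<longrightarrow> (\<exists>W. subspace W \<and> W \<subseteq> U \<and> dim W + 1 = n \<and> (\<forall>S\<in>\<D>. \<not> S \<subseteq> W)))"

lemma card_img_le:
  assumes "finite A" "\<And>S. S \<in> A \<Longrightarrow> P (f S) \<Longrightarrow> Q S"
  shows "card {T \<in> f ` A. P T} \<le> card {S \<in> A. Q S}"
proof -
  have "{T \<in> f ` A. P T} \<subseteq> f ` {S \<in> A. Q S}" using assms(2) by blast
  then have "card {T \<in> f ` A. P T} \<le> card (f ` {S \<in> A. Q S})"
    using assms(1) by (intro card_mono) auto
  also have "\<dots> \<le> card {S \<in> A. Q S}" by (rule card_image_le) (use assms(1) in auto)
  finally show ?thesis .
qed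

lemma B1: "Bprop 1"
  unfolding Bprop_def
proof (intro allI impI)
  fix U H \<E> assume a: "subspace U \<and> dim U = 1 \<and> subspace H \<and> H \<subseteq> U \<and> dim H + 1 = 1
     \<and> finite \<E> \<and> (\<forall>S\<in>\<E>. subspace S \<and> S \<subseteq> U \<and> 1 \<le> dim S \<and> dim S + 1 \<le> 1)
     \<and> (\<forall>k. card {S\<in>\<E>. dim S = k} \<le> p)"
  have "\<not> U \<subseteq> H"
  proof
    assume "U \<subseteq> H"
    then have "dim U \<le> dim H" by (rule dim_subset)
    with a show False by linarith
  qed
  then obtain x where x: "x \<in> U" "x \<notin> H" by blast
  have "False" if "S \<in> \<E>" for S
  proof -
    from a that have "1 \<le> dim S" "dim S + 1 \<le> 1" by blast+
    then show False by linarith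
  qed
  then have "\<E> = {}" by blast
  with x show "\<exists>x\<in>U. x \<notin> H \<and> (\<forall>S\<in>\<E>. x \<notin> S)" by blast
qed

lemma D1: "Dprop 1"
  unfolding Dprop_def
proof (intro allI impI)
  fix U \<D> assume a: "subspace U \<and> dim U = 1 \<and> 1 \<le> (1::nat)
     \<and> finite \<D> \<and> (\<forall>S\<in>\<D>. subspace S \<and> S \<subseteq> U \<and> 1 \<le> dim S \<and> dim S + 1 \<le> 1)
     \<and> (\<forall>k. card {S\<in>\<D>. dim S = k} \<le> p)"
  have "False" if "S \<in> \<D>" for S
  proof -
    from a that have "1 \<le> dim S" "dim S + 1 \<le> 1" by blast+
    then show False by linarith
  qed
  then have "\<D> = {}" by blast
  moreover have "{0} \<subseteq> U" using a subspace_0 by blast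
  ultimately show "\<exists>W. subspace W \<and> W \<subseteq> U \<and> dim W + 1 = 1 \<and> (\<forall>S\<in>\<D>. \<not> S \<subseteq> W)"
    by (intro exI[of _ "{0}"]) simp
qed

lemma sub1: "(\<And>a b. a \<in> X \<Longrightarrow> b \<in> X \<Longrightarrow> a = b) \<Longrightarrow> finite X \<and> card X \<le> 1"
proof (cases "X = {}")
  case False
  assume h: "\<And>a b. a \<in> X \<Longrightarrow> b \<in> X \<Longrightarrow> a = b"
  from False obtain a where "a \<in> X" by blast
  with h have "X = {a}" by blast
  then show ?thesis by simp
qed simp

lemma Bstep_core:
  assumes n2: "2 \<le> n" and IB: "Bprop (n-1)" and ID: "Dprop (n-1)"
    and U: "subspace U" and dU: "dim U = n" and H: "subspace H" and HU: "H \<subseteq> U"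
    and dH: "dim H + 1 = n" and fE: "finite \<E>"
    and Es1: "\<And>S. S \<in> \<E> \<Longrightarrow> subspace S" and Es2: "\<And>S. S \<in> \<E> \<Longrightarrow> S \<subseteq> U"
    and Es3: "\<And>S. S \<in> \<E> \<Longrightarrow> 1 \<le> dim S" and Es4: "\<And>S. S \<in> \<E> \<Longrightarrow> dim S + 1 \<le> n"
    and cE: "\<And>k. card {S\<in>\<E>. dim S = k} \<le> p"
  shows "\<exists>x\<in>U. x \<notin> H \<and> (\<forall>S\<in>\<E>. x \<notin> S)"
proof -
  have dHU: "dim H + 1 = dim U" using dH dU by simp
  define E2 where "E2 = {S\<in>\<E>. \<not> S \<subseteq> H \<and> 2 \<le> dim S}"
  define E1 where "E1 = {S\<in>\<E>. \<not> S \<subseteq> H \<and> dim S = 1}"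
  have fE2: "finite E2" and fE1: "finite E1" using fE unfolding E2_def E1_def by auto
  have dimSH: "dim (S \<inter> H) + 1 = dim S" if "S \<in> E2" for S
    using that unfolding E2_def by (intro HI[OF U _ H _ HU dHU]) (auto simp: Es1 Es2)
  define D where "D = (\<lambda>S. S \<inter> H) ` E2"
  have cnt: "card {S\<in>E2. dim S = k} \<le> p" for k
  proof -
    have "card {S\<in>E2. dim S = k} \<le> card {S\<in>\<E>. dim S = k}"
      by (rule card_mono) (use fE in \<open>auto simp: E2_def\<close>)
    then show ?thesis using cE[of k] by linarith
  qed
  have "\<exists>W. subspace W \<and> W \<subseteq> H \<and> dim W + 1 = n - 1 \<and> (\<forall>S\<in>D. \<not> S \<subseteq> W)"
  proof (rule ID[unfolded Dprop_def, rule_format], intro conjI)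
    show "subspace H" by (rule H)
    show "dim H = n - 1" "1 \<le> n - 1" using dH n2 by auto
    show "finite D" using fE2 by (simp add: D_def)
    show "\<forall>S\<in>D. subspace S \<and> S \<subseteq> H \<and> 1 \<le> dim S \<and> dim S + 1 \<le> n - 1"
    proof
      fix T assume "T \<in> D"
      then obtain S where S: "S \<in> E2" "T = S \<inter> H" by (auto simp: D_def)
      have "S \<in> \<E>" "2 \<le> dim S" using S(1) by (auto simp: E2_def)
      then show "subspace T \<and> T \<subseteq> H \<and> 1 \<le> dim T \<and> dim T + 1 \<le> n - 1"
        using S dimSH[OF S(1)] Es1 Es4[of S] H by (auto intro: subspace_inter)
    qed
    show "\<forall>k. card {S \<in> D. dim S = k} \<le> p"
    proof
      fix k
      have "card {S \<in> D. dim S = k} \<le> card {S\<in>E2. dim S = k + 1}"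
        unfolding D_def by (rule card_img_le[OF fE2]) (use dimSH in auto)
      then show "card {S \<in> D. dim S = k} \<le> p" using cnt[of "k+1"] by linarith
    qed
  qed
  then obtain W where W: "subspace W" "W \<subseteq> H" "dim W + 1 = n - 1" and WD: "\<forall>S\<in>D. \<not> S \<subseteq> W"
    by blast
  have "\<not> H \<subseteq> W"
  proof
    assume "H \<subseteq> W" then have "dim H \<le> dim W" by (rule dim_subset)
    with W(3) dH n2 show False by linarith
  qed
  then obtain h where h: "h \<in> H" "h \<notin> W" by blast
  have "\<not> U \<subseteq> H"
  proof
    assume "U \<subseteq> H" then have "dim U \<le> dim H" by (rule dim_subset)
    with dU dH show False by linarith
  qed
  then obtain u where u: "u \<in> U" "u \<notin> H" by blast
  define Hc where "Hc c = span (insert (u + c *s h) W)" for c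
  have aH: "u + c *s h \<notin> H" for c
  proof
    assume "u + c *s h \<in> H"
    then have "(u + c *s h) - c *s h \<in> H" using h H by (intro subspace_diff subspace_scale) auto
    then show False using u by simp
  qed
  have int: "x \<in> W" if "x \<in> Hc c" "x \<in> H" for x c
    using GL[OF W(1) H W(2) aH[of c]] that unfolding Hc_def by blast
  have two: "x \<in> W" if c12: "c1 \<noteq> c2" and x1: "x \<in> Hc c1" and x2: "x \<in> Hc c2" for x c1 c2
  proof -
    obtain t1 where t1: "x - t1 *s (u + c1 *s h) \<in> W"
      using x1 unfolding Hc_def span_breakdown_eq spanS[OF W(1)] by blast
    obtain t2 where t2: "x - t2 *s (u + c2 *s h) \<in> W"
      using x2 unfolding Hc_def span_breakdown_eq spanS[OF W(1)] by blast
    have "(x - t1 *s (u + c1 *s h)) - (x - t2 *s (u + c2 *s h)) \<in> W"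
      using t1 t2 W(1) by (rule subspace_diff[rotated -2])
    moreover have "(x - t1 *s (u + c1 *s h)) - (x - t2 *s (u + c2 *s h))
        = (t2 - t1) *s u + (t2 * c2 - t1 * c1) *s h"
      by (simp add: algebra_simps)
    ultimately have z: "(t2 - t1) *s u + (t2 * c2 - t1 * c1) *s h \<in> W" by simp
    have tt: "t1 = t2"
    proof (rule ccontr)
      assume ne: "t1 \<noteq> t2"
      have "((t2 - t1) *s u + (t2 * c2 - t1 * c1) *s h) - (t2 * c2 - t1 * c1) *s h \<in> H"
        using z W(2) h H by (intro subspace_diff subspace_scale) auto
      then have "(t2 - t1) *s u \<in> H" by simp
      then have "inverse (t2 - t1) *s ((t2 - t1) *s u) \<in> H" by (rule subspace_scale[OF H])
      then show False using ne u by simp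
    qed
    have t0: "t1 = 0"
    proof (rule ccontr)
      assume ne: "t1 \<noteq> 0"
      have "(t1 * (c2 - c1)) *s h \<in> W" using z tt by (simp add: algebra_simps)
      then have "inverse (t1 * (c2 - c1)) *s ((t1 * (c2 - c1)) *s h) \<in> W" by (rule subspace_scale[OF W(1)])
      moreover have "inverse (t1 * (c2 - c1)) * (t1 * (c2 - c1)) = 1" using ne c12 by (simp add: field_simps)
      ultimately have "h \<in> W" by (metis scale_one scale_scale)
      then show False using h by simp
    qed
    show "x \<in> W" using t1 t0 by simp
  qed
  define Bad where "Bad = (\<Union>S\<in>E1. {c. S \<subseteq> Hc c})"
  have each: "finite {c. S \<subseteq> Hc c} \<and> card {c. S \<subseteq> Hc c} \<le> 1" if "S \<in> E1" for S
  proof (rule sub1)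
    fix a b assume ab: "a \<in> {c. S \<subseteq> Hc c}" "b \<in> {c. S \<subseteq> Hc c}"
    show "a = b"
    proof (rule ccontr)
      assume "a \<noteq> b"
      then have "S \<subseteq> W" using ab two by blast
      then show False using that W(2) unfolding E1_def by blast
    qed
  qed
  have fBad: "finite Bad" unfolding Bad_def using fE1 each by blast
  have "card Bad \<le> (\<Sum>S\<in>E1. card {c. S \<subseteq> Hc c})" unfolding Bad_def by (rule card_UN_le[OF fE1])
  also have "\<dots> \<le> (\<Sum>S\<in>E1. 1)" by (rule sum_mono) (use each in blast)
  also have "\<dots> = card E1" by simp
  also have "\<dots> \<le> card {S\<in>\<E>. dim S = 1}" by (rule card_mono) (use fE in \<open>auto simp: E1_def\<close>)
  also have "\<dots> \<le> p" by (rule cE)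
  finally have cBad: "card Bad \<le> p" .
  have "Bad \<noteq> UNIV"
  proof
    assume "Bad = UNIV"
    then show False using fs fBad cBad by auto
  qed
  then obtain c where c: "c \<notin> Bad" by blast
  define H' where "H' = Hc c"
  define a where "a = u + c *s h"
  have aU: "a \<in> U" unfolding a_def using u h HU U by (intro subspace_add subspace_scale) auto
  have H'sub: "subspace H'" unfolding H'_def Hc_def by simp
  have H'U: "H' \<subseteq> U" unfolding H'_def Hc_def using aU W(2) HU U unfolding a_def by (intro span_minimal) auto
  have "a \<notin> span W" unfolding spanS[OF W(1)] using aH[of c] W(2) a_def by blast
  then have dH': "dim H' = dim W + 1" unfolding H'_def Hc_def a_def[symmetric] by (simp add: dim_insert)
  have WH': "W \<subseteq> H'" unfolding H'_def Hc_def by (meson span_superset subset_insertI subset_trans)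
  have dH'U: "dim H' + 1 = dim U" using dH' W(3) dU n2 by simp
  have nSH': "\<not> S \<subseteq> H'" if "S \<in> E2" for S
  proof
    assume "S \<subseteq> H'"
    then have "S \<inter> H \<subseteq> W" using int unfolding H'_def by blast
    moreover have "S \<inter> H \<in> D" using that by (simp add: D_def)
    ultimately show False using WD by blast
  qed
  have dimSH': "dim (S \<inter> H') + 1 = dim S" if "S \<in> E2" for S
    using that nSH'[OF that] unfolding E2_def
    by (intro HI[OF U _ H'sub _ H'U dH'U]) (auto simp: Es1 Es2)
  define G where "G = (\<lambda>S. S \<inter> H') ` E2"
  have "\<exists>x\<in>H'. x \<notin> W \<and> (\<forall>S\<in>G. x \<notin> S)"
  proof (rule IB[unfolded Bprop_def, rule_format], intro conjI)
    show "subspace H'" "subspace W" "W \<subseteq> H'" by (fact H'sub W(1) WH')+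
    show "dim H' = n - 1" "dim W + 1 = n - 1" using dH' W(3) by auto
    show "finite G" using fE2 by (simp add: G_def)
    show "\<forall>S\<in>G. subspace S \<and> S \<subseteq> H' \<and> 1 \<le> dim S \<and> dim S + 1 \<le> n - 1"
    proof
      fix T assume "T \<in> G"
      then obtain S where S: "S \<in> E2" "T = S \<inter> H'" by (auto simp: G_def)
      have "S \<in> \<E>" "2 \<le> dim S" using S(1) by (auto simp: E2_def)
      then show "subspace T \<and> T \<subseteq> H' \<and> 1 \<le> dim T \<and> dim T + 1 \<le> n - 1"
        using S dimSH'[OF S(1)] Es1 Es4[of S] H'sub by (auto intro: subspace_inter)
    qed
    show "\<forall>k. card {S \<in> G. dim S = k} \<le> p"
    proof
      fix k
      have "card {S \<in> G. dim S = k} \<le> card {S\<in>E2. dim S = k + 1}"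
        unfolding G_def by (rule card_img_le[OF fE2]) (use dimSH' in auto)
      then show "card {S \<in> G. dim S = k} \<le> p" using cnt[of "k+1"] by linarith
    qed
  qed
  then obtain x where x: "x \<in> H'" "x \<notin> W" "\<forall>S\<in>G. x \<notin> S" by blast
  have xU: "x \<in> U" using x H'U by blast
  have xH: "x \<notin> H" using int x unfolding H'_def by blast
  have "x \<notin> S" if S: "S \<in> \<E>" for S
  proof
    assume xS: "x \<in> S"
    have nSH: "\<not> S \<subseteq> H" using xS xH by blast
    show False
    proof (cases "2 \<le> dim S")
      case True
      then have "S \<in> E2" using S nSH by (simp add: E2_def)
      then have "S \<inter> H' \<in> G" by (simp add: G_def)
      then show False using x xS by blast
    next
      case False
      then have d1: "dim S = 1" using Es3[OF S] by linarith
      then have S1: "S \<in> E1" using S nSH by (simp add: E1_def)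
      have "\<not> S \<subseteq> H'" using c S1 unfolding Bad_def H'_def by blast
      then have "dim (S \<inter> H') + 1 = dim S"
        using S by (intro HI[OF U _ H'sub _ H'U dH'U]) (auto simp: Es1 Es2)
      then have "dim (S \<inter> H') = 0" using d1 by linarith
      then have "S \<inter> H' \<subseteq> {0}" by simp
      then have "x = 0" using xS x(1) by blast
      then show False using x(2) subspace_0[OF W(1)] by simp
    qed
  qed
  then show ?thesis using xU xH by blast
qed

lemma Bstep: assumes "2 \<le> n" "Bprop (n-1)" "Dprop (n-1)" shows "Bprop n"
  unfolding Bprop_def
proof (intro allI impI)
  fix U H \<E>
  assume "subspace U \<and> dim U = n \<and> subspace H \<and> H \<subseteq> U \<and> dim H + 1 = n
     \<and> finite \<E> \<and> (\<forall>S\<in>\<E>. subspace S \<and> S \<subseteq> U \<and> 1 \<le> dim S \<and> dim S + 1 \<le> n)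
     \<and> (\<forall>k. card {S\<in>\<E>. dim S = k} \<le> p)"
  then show "\<exists>x\<in>U. x \<notin> H \<and> (\<forall>S\<in>\<E>. x \<notin> S)"
    using Bstep_core[OF assms, of U H \<E>] by blast
qed

lemma Dstep_core:
  assumes n2: "2 \<le> n" and IB: "Bprop n" and ID: "Dprop (n-1)"
    and U: "subspace U" and dU: "dim U = n" and fD: "finite \<D>"
    and Ds1: "\<And>S. S \<in> \<D> \<Longrightarrow> subspace S" and Ds2: "\<And>S. S \<in> \<D> \<Longrightarrow> S \<subseteq> U"
    and Ds3: "\<And>S. S \<in> \<D> \<Longrightarrow> 1 \<le> dim S" and Ds4: "\<And>S. S \<in> \<D> \<Longrightarrow> dim S + 1 \<le> n"
    and cD: "\<And>k. card {S\<in>\<D>. dim S = k} \<le> p"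
  shows "\<exists>W. subspace W \<and> W \<subseteq> U \<and> dim W + 1 = n \<and> (\<forall>S\<in>\<D>. \<not> S \<subseteq> W)"
proof -
  have "{0} \<subseteq> U" using subspace_0[OF U] by blast
  moreover have "dim {0} < dim U" using dU n2 by simp
  ultimately obtain H0 where H0: "subspace H0" "H0 \<subseteq> U" "dim H0 + 1 = dim U"
    using EX[of "{0}" U] U by auto
  have "\<exists>x\<in>U. x \<notin> H0 \<and> (\<forall>S\<in>\<D>. x \<notin> S)"
  proof (rule IB[unfolded Bprop_def, rule_format], intro conjI)
    show "subspace U" "dim U = n" "subspace H0" "H0 \<subseteq> U" "dim H0 + 1 = n" "finite \<D>"
      using U dU H0 fD by auto
    show "\<forall>S\<in>\<D>. subspace S \<and> S \<subseteq> U \<and> 1 \<le> dim S \<and> dim S + 1 \<le> n"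
      using Ds1 Ds2 Ds3 Ds4 by blast
    show "\<forall>k. card {S \<in> \<D>. dim S = k} \<le> p" using cD by blast
  qed
  then obtain v where v: "v \<in> U" "v \<notin> H0" "\<forall>S\<in>\<D>. v \<notin> S" by blast
  define Sp where "Sp S = span (insert v S)" for S
  have dSp: "dim (Sp S) = dim S + 1" if "S \<in> \<D>" for S
  proof -
    have "v \<notin> span S" unfolding spanS[OF Ds1[OF that]] using v that by blast
    then show ?thesis unfolding Sp_def by (simp add: dim_insert)
  qed
  have SpU: "Sp S \<subseteq> U" if "S \<in> \<D>" for S
    unfolding Sp_def using v(1) Ds2[OF that] U by (intro span_minimal) auto
  have nSpH: "\<not> Sp S \<subseteq> H0" for S
    using v(2) span_base[of v "insert v S"] unfolding Sp_def by blast
  have dD': "dim (Sp S \<inter> H0) = dim S" if "S \<in> \<D>" for S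
  proof -
    have "dim (Sp S \<inter> H0) + 1 = dim (Sp S)"
      by (rule HI[OF U _ H0(1) SpU[OF that] H0(2) H0(3) nSpH]) (simp add: Sp_def)
    then show ?thesis using dSp[OF that] by linarith
  qed
  define D2 where "D2 = {S\<in>\<D>. dim S + 2 \<le> n}"
  have fD2: "finite D2" using fD by (simp add: D2_def)
  define D' where "D' = (\<lambda>S. Sp S \<inter> H0) ` D2"
  have "\<exists>W. subspace W \<and> W \<subseteq> H0 \<and> dim W + 1 = n - 1 \<and> (\<forall>S\<in>D'. \<not> S \<subseteq> W)"
  proof (rule ID[unfolded Dprop_def, rule_format], intro conjI)
    show "subspace H0" by (rule H0(1))
    show "dim H0 = n - 1" "1 \<le> n - 1" using H0(3) dU n2 by auto
    show "finite D'" using fD2 by (simp add: D'_def)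
    show "\<forall>S\<in>D'. subspace S \<and> S \<subseteq> H0 \<and> 1 \<le> dim S \<and> dim S + 1 \<le> n - 1"
    proof
      fix T assume "T \<in> D'"
      then obtain S where S: "S \<in> D2" "T = Sp S \<inter> H0" by (auto simp: D'_def)
      have SD: "S \<in> \<D>" "dim S + 2 \<le> n" using S(1) by (auto simp: D2_def)
      have "subspace T" using S(2) H0(1) by (simp add: Sp_def subspace_inter)
      moreover have "dim T = dim S" using dD'[OF SD(1)] S(2) by simp
      ultimately show "subspace T \<and> T \<subseteq> H0 \<and> 1 \<le> dim T \<and> dim T + 1 \<le> n - 1"
        using S(2) SD Ds3[OF SD(1)] by auto
    qed
    show "\<forall>k. card {S \<in> D'. dim S = k} \<le> p"
    proof
      fix k
      have "card {S \<in> D'. dim S = k} \<le> card {S\<in>D2. dim S = k}"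
        unfolding D'_def by (rule card_img_le[OF fD2]) (use dD' in \<open>auto simp: D2_def\<close>)
      also have "\<dots> \<le> card {S\<in>\<D>. dim S = k}"
        by (rule card_mono) (use fD in \<open>auto simp: D2_def\<close>)
      finally show "card {S \<in> D'. dim S = k} \<le> p" using cD[of k] by linarith
    qed
  qed
  then obtain W' where W': "subspace W'" "W' \<subseteq> H0" "dim W' + 1 = n - 1"
    and WD: "\<forall>S\<in>D'. \<not> S \<subseteq> W'" by blast
  define W where "W = span (insert v W')"
  have Wsub: "subspace W" unfolding W_def by simp
  have WU: "W \<subseteq> U" unfolding W_def using v(1) W'(2) H0(2) U by (intro span_minimal) auto
  have "v \<notin> span W'" unfolding spanS[OF W'(1)] using v(2) W'(2) by blast
  then have dW: "dim W = dim W' + 1" unfolding W_def by (simp add: dim_insert)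
  have vW: "v \<in> W" unfolding W_def by (rule span_base) simp
  have "\<not> S \<subseteq> W" if S: "S \<in> \<D>" for S
  proof
    assume SW: "S \<subseteq> W"
    have SpW: "Sp S \<subseteq> W" unfolding Sp_def using SW vW Wsub by (intro span_minimal) auto
    then have "dim (Sp S) \<le> dim W" by (rule dim_subset)
    then have "dim S + 2 \<le> n" using dSp[OF S] dW W'(3) n2 by linarith
    then have "Sp S \<inter> H0 \<in> D'" using S by (auto simp: D'_def D2_def)
    moreover have "Sp S \<inter> H0 \<subseteq> W'"
    proof
      fix x assume "x \<in> Sp S \<inter> H0"
      then show "x \<in> W'" using GL[OF W'(1) H0(1) W'(2) v(2), of x] SpW unfolding W_def by blast
    qed
    ultimately show False using WD by blast
  qed
  then show ?thesis using Wsub WU dW W'(3) n2 by (intro exI[of _ W]) auto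
qed

lemma Dstep: assumes "2 \<le> n" "Bprop n" "Dprop (n-1)" shows "Dprop n"
  unfolding Dprop_def
proof (intro allI impI)
  fix U \<D>
  assume "subspace U \<and> dim U = n \<and> 1 \<le> n
     \<and> finite \<D> \<and> (\<forall>S\<in>\<D>. subspace S \<and> S \<subseteq> U \<and> 1 \<le> dim S \<and> dim S + 1 \<le> n)
     \<and> (\<forall>k. card {S\<in>\<D>. dim S = k} \<le> p)"
  then show "\<exists>W. subspace W \<and> W \<subseteq> U \<and> dim W + 1 = n \<and> (\<forall>S\<in>\<D>. \<not> S \<subseteq> W)"
    using Dstep_core[OF assms, of U \<D>] by blast
qed

lemma BD: "1 \<le> n \<Longrightarrow> Bprop n \<and> Dprop n"
proof (induction n)
  case 0 then show ?case by simp
next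
  case (Suc m)
  show ?case
  proof (cases "m = 0")
    case True then show ?thesis using B1 D1 by simp
  next
    case False
    then have IH: "Bprop m" "Dprop m" using Suc.IH by auto
    have B: "Bprop (Suc m)" using Bstep[of "Suc m"] IH False by simp
    moreover have "Dprop (Suc m)" using Dstep[of "Suc m"] B IH False by simp
    ultimately show ?thesis by simp
  qed
qed

lemma sum_cover:
  fixes I :: "'i set" and E :: "'i \<Rightarrow> 'v set"
  assumes fI: "finite I" and cI: "card I = (\<Sum>k\<in>{1..m}. card {i\<in>I. dim (E i) = k})"
  shows "\<forall>i\<in>I. 1 \<le> dim (E i) \<and> dim (E i) \<le> m"
proof -
  define A where "A k = {i\<in>I. dim (E i) = k}" for k
  have "card (\<Union>k\<in>{1..m}. A k) = (\<Sum>k\<in>{1..m}. card (A k))"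
    by (rule card_UN_disjoint) (use fI in \<open>auto simp: A_def\<close>)
  then have "card (\<Union>k\<in>{1..m}. A k) = card I" using cI by (simp add: A_def)
  moreover have "(\<Union>k\<in>{1..m}. A k) \<subseteq> I" by (auto simp: A_def)
  ultimately have "(\<Union>k\<in>{1..m}. A k) = I" using fI card_subset_eq by blast
  then show ?thesis by (auto simp: A_def)
qed

lemma part1:
  fixes I :: "'i set" and E :: "'i \<Rightarrow> 'v set"
  assumes p_pos: "p > 0" and dimE: "dim (UNIV::'v set) = n" and fI: "finite I"
    and cI: "card I = (n - 1) * p + 1" and sub: "\<forall>i\<in>I. subspace (E i)"
    and c1: "card {i\<in>I. dim (E i) = n - 1} = p + 1"
    and c2: "\<forall>k\<in>{1..n-2}. card {i\<in>I. dim (E i) = k} = p"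
  shows "\<not> UNIV \<subseteq> (\<Union>i\<in>I. E i)"
proof -
  have n2: "2 \<le> n"
  proof (rule ccontr)
    assume "\<not> 2 \<le> n"
    then have "card I = 1" using cI by (cases n) auto
    moreover have "card {i\<in>I. dim (E i) = n - 1} \<le> card I" by (rule card_mono) (use fI in auto)
    ultimately show False using c1 p_pos by simp
  qed
  then obtain m where m: "n = m + 2" by (metis add.commute le_Suc_ex)
  have ins: "{1..n-1} = insert (n-1) {1..n-2}" using n2 by auto
  have "(\<Sum>k\<in>{1..n-1}. card {i\<in>I. dim (E i) = k})
      = card {i\<in>I. dim (E i) = n - 1} + (\<Sum>k\<in>{1..n-2}. card {i\<in>I. dim (E i) = k})"
    unfolding ins by (subst sum.insert) (use n2 in auto)
  also have "\<dots> = p + 1 + m * p" using c1 c2 m by simp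
  also have "\<dots> = card I" using cI m by (simp add: algebra_simps)
  finally have dims: "\<forall>i\<in>I. 1 \<le> dim (E i) \<and> dim (E i) \<le> n - 1"
    using sum_cover[OF fI] by metis
  have "{i\<in>I. dim (E i) = n - 1} \<noteq> {}" using c1 by (metis add_is_0 card.empty one_neq_zero)
  then obtain i0 where i0: "i0 \<in> I" "dim (E i0) = n - 1" by blast
  have BP: "Bprop n" using BD n2 by simp
  have "\<exists>x\<in>UNIV. x \<notin> E i0 \<and> (\<forall>S\<in>E ` (I - {i0}). x \<notin> S)"
  proof (rule BP[unfolded Bprop_def, rule_format], intro conjI)
    show "subspace UNIV" "dim UNIV = n" "subspace (E i0)" "E i0 \<subseteq> UNIV" "dim (E i0) + 1 = n"
      using dimE sub i0 n2 by auto
    show "finite (E ` (I - {i0}))" using fI by simp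
    show "\<forall>S\<in>E ` (I - {i0}). subspace S \<and> S \<subseteq> UNIV \<and> 1 \<le> dim S \<and> dim S + 1 \<le> n"
      using dims sub n2 by fastforce
    show "\<forall>k. card {S \<in> E ` (I - {i0}). dim S = k} \<le> p"
    proof
      fix k
      have "card {S \<in> E ` (I - {i0}). dim S = k} \<le> card {i\<in>I - {i0}. dim (E i) = k}"
        by (rule card_img_le) (use fI in auto)
      also have "\<dots> \<le> p"
      proof (cases "k = n - 1")
        case True
        then have "{i\<in>I - {i0}. dim (E i) = k} = {i\<in>I. dim (E i) = n - 1} - {i0}" by auto
        then have "card {i\<in>I - {i0}. dim (E i) = k} = p" using c1 i0 fI by simp
        then show ?thesis by simp
      next
        case False
        show ?thesis
        proof (cases "k \<in> {1..n-2}")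
          case True
          have "card {i\<in>I - {i0}. dim (E i) = k} \<le> card {i\<in>I. dim (E i) = k}"
            by (rule card_mono) (use fI in auto)
          then show ?thesis using c2 True by simp
        next
          case F2: False
          have "{i\<in>I - {i0}. dim (E i) = k} = {}" using dims False F2 by fastforce
          then show ?thesis by (metis card.empty le0)
        qed
      qed
      finally show "card {S \<in> E ` (I - {i0}). dim S = k} \<le> p" .
    qed
  qed
  then obtain x where "x \<notin> E i0" "\<forall>S\<in>E ` (I - {i0}). x \<notin> S" by blast
  then have "x \<notin> (\<Union>i\<in>I. E i)" by blast
  then show ?thesis by blast
qed

lemma part2:
  fixes J :: "'j set" and F :: "'j \<Rightarrow> 'v set"
  assumes dimE: "dim (UNIV::'v set) = n" and fJ: "finite J"
    and cJ: "card J = (n - 1) * p" and sub: "\<forall>j\<in>J. subspace (F j)"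
    and c: "\<forall>k\<in>{1..n-1}. card {j\<in>J. dim (F j) = k} = p"
  shows "\<exists>B. independent B \<and> span B = UNIV \<and> B \<inter> (\<Union>j\<in>J. F j) = {}"
proof -
  have "(\<Sum>k\<in>{1..n-1}. card {j\<in>J. dim (F j) = k}) = card J" using c cJ by simp
  then have dims: "\<forall>j\<in>J. 1 \<le> dim (F j) \<and> dim (F j) \<le> n - 1"
    using sum_cover[OF fJ] by metis
  have step: "\<exists>B. independent B \<and> card B = j \<and> B \<inter> (\<Union>j\<in>J. F j) = {}" if "j \<le> n" for j
    using that
  proof (induction j)
    case 0 then show ?case by (intro exI[of _ "{}"]) (simp add: independent_empty)
  next
    case (Suc j)
    then obtain B where B: "independent B" "card B = j" "B \<inter> (\<Union>j\<in>J. F j) = {}" by auto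
    have dB: "dim (span B) = j" using B dim_span_eq_card_independent by metis
    obtain H where H: "subspace H" "span B \<subseteq> H" "dim H + 1 = n"
      using EX[of "span B" UNIV] dB dimE Suc.prems by auto
    have BP: "Bprop n" using BD Suc.prems by simp
    have "\<exists>x\<in>UNIV. x \<notin> H \<and> (\<forall>S\<in>F ` J. x \<notin> S)"
    proof (rule BP[unfolded Bprop_def, rule_format], intro conjI)
      show "subspace UNIV" "dim UNIV = n" "subspace H" "H \<subseteq> UNIV" "dim H + 1 = n"
        using dimE H by auto
      show "finite (F ` J)" using fJ by simp
      show "\<forall>S\<in>F ` J. subspace S \<and> S \<subseteq> UNIV \<and> 1 \<le> dim S \<and> dim S + 1 \<le> n"
        using dims sub Suc.prems by fastforce
      show "\<forall>k. card {S \<in> F ` J. dim S = k} \<le> p"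
      proof
        fix k
        have "card {S \<in> F ` J. dim S = k} \<le> card {i\<in>J. dim (F i) = k}"
          by (rule card_img_le) (use fJ in auto)
        also have "\<dots> \<le> p"
        proof (cases "k \<in> {1..n-1}")
          case True then show ?thesis using c by simp
        next
          case False
          have "{i\<in>J. dim (F i) = k} = {}" using dims False by fastforce
          then show ?thesis by (metis card.empty le0)
        qed
        finally show "card {S \<in> F ` J. dim S = k} \<le> p" .
      qed
    qed
    then obtain x where x: "x \<notin> H" "\<forall>S\<in>F ` J. x \<notin> S" by blast
    have xB: "x \<notin> span B" using x H by blast
    then have "x \<notin> B" using span_base by blast
    have "independent (insert x B)" using xB B(1) by (rule independent_insertI)
    moreover have "card (insert x B) = Suc j"
      using \<open>x \<notin> B\<close> B finiteI_independent by simp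
    moreover have "insert x B \<inter> (\<Union>j\<in>J. F j) = {}" using B(3) x(2) by blast
    ultimately show ?case by blast
  qed
  then obtain B where B: "independent B" "card B = n" "B \<inter> (\<Union>j\<in>J. F j) = {}" by blast
  have "UNIV \<subseteq> span B" by (rule card_ge_dim_independent) (use B dimE in auto)
  then show ?thesis using B by blast
qed

end

theorem mainTheorem12:
  fixes scale :: "'k::field \<Rightarrow> 'v::ab_group_add \<Rightarrow> 'v"
    and p n :: nat
  assumes vs: "vector_space scale"
    and fin_dim: "\<exists>S. finite S \<and> module.span scale S = UNIV"
    and dimE: "vector_space.dim scale (UNIV :: 'v set) = n"
    and p_pos: "p > 0"
    and field_size: "infinite (UNIV :: 'k set) \<or> card (UNIV :: 'k set) > p"
  shows
    "(\<forall>(I :: 'i set) (E :: 'i \<Rightarrow> 'v set).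
        finite I \<and> card I = (n - 1) * p + 1
        \<and> (\<forall>i\<in>I. module.subspace scale (E i))
        \<and> card {i \<in> I. vector_space.dim scale (E i) = n - 1} = p + 1
        \<and> (\<forall>k\<in>{1..n-2}. card {i \<in> I. vector_space.dim scale (E i) = k} = p)
        \<longrightarrow> \<not> (UNIV \<subseteq> (\<Union>i\<in>I. E i)))
     \<and>
     (\<forall>(J :: 'j set) (F :: 'j \<Rightarrow> 'v set).
        finite J \<and> card J = (n - 1) * p
        \<and> (\<forall>j\<in>J. module.subspace scale (F j))
        \<and> (\<forall>k\<in>{1..n-1}. card {j \<in> J. vector_space.dim scale (F j) = k} = p)
        \<longrightarrow> (\<exists>B. \<not> module.dependent scale B \<and> module.span scale B = UNIV
                 \<and> B \<inter> (\<Union>j\<in>J. F j) = {}))"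
  proof -
  interpret vector_space scale by (rule vs)
  obtain S where S: "finite S" "span S = UNIV" using fin_dim by blast
  obtain B where B: "independent B" "UNIV \<subseteq> span B" using basis_exists[of UNIV] by blast
  have fB: "finite B" using independent_span_bound[OF S(1) B(1)] S(2) by auto
  interpret cov scale B p
    by unfold_locales (use fB B field_size in \<open>auto simp: span_eq_iff\<close>)
  show ?thesis
  proof (intro conjI allI impI)
    fix I :: "'i set" and E :: "'i \<Rightarrow> 'v set"
    assume "finite I \<and> card I = (n - 1) * p + 1
        \<and> (\<forall>i\<in>I. subspace (E i))
        \<and> card {i \<in> I. dim (E i) = n - 1} = p + 1
        \<and> (\<forall>k\<in>{1..n-2}. card {i \<in> I. dim (E i) = k} = p)"
    then show "\<not> (UNIV \<subseteq> (\<Union>i\<in>I. E i))" using part1[OF p_pos dimE] by blast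
  next
    fix J :: "'j set" and F :: "'j \<Rightarrow> 'v set"
    assume "finite J \<and> card J = (n - 1) * p
        \<and> (\<forall>j\<in>J. subspace (F j))
        \<and> (\<forall>k\<in>{1..n-1}. card {j \<in> J. dim (F j) = k} = p)"
    then show "\<exists>B. independent B \<and> span B = UNIV \<and> B \<inter> (\<Union>j\<in>J. F j) = {}"
      using part2[OF dimE] by blast
  qed
qed

end
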